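(* In the public goods model, every MNW allocation satisfies Prop1.
   Context: Public goods model: agents $[n]$, goods $G=[m]$, integer $0\le k\le m$, nonnegative integer additive values $v_{ij}$, $v_i(S)=\sum_{j\in S}v_{ij}$, every agent having some good with $v_{ij}>0$. An allocation is $x\subseteq G$ with $|x|\le k$. $\mathrm{NW}(x)=(\prod_i v_i(x))^{1/n}$; an MNW allocation maximizes NW over allocations, where if all allocations have NW $0$ an MNW allocation maximizes the number of agents with positive utility and then the product of positive utilities. $\mathrm{Prop}_i=\frac1n\max_{|y|\le k}v_i(y)$. $x$ satisfies Prop1 if for every agent $i$ there exist $g\in x$ and $g'\in G$ with $v_i((x\setminus\{g\})\cup\{g'\})\ge\mathrm{Prop}_i$. *)

theory Defs
  imports Complex_Main
begin

text \<open>Public goods model. Agents are {..<n}, goods are {..<m};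
  v i j is the (nonnegative integer) value of agent i for good j.\<close>

definition util :: "(nat \<Rightarrow> nat \<Rightarrow> nat) \<Rightarrow> nat \<Rightarrow> nat set \<Rightarrow> nat" where
  "util v i S = (\<Sum>j\<in>S. v i j)"

definition allocations :: "nat \<Rightarrow> nat \<Rightarrow> nat set set" where
  "allocations m k = {x. x \<subseteq> {..<m} \<and> card x \<le> k}"

definition NW :: "nat \<Rightarrow> (nat \<Rightarrow> nat \<Rightarrow> nat) \<Rightarrow> nat set \<Rightarrow> real" where
  "NW n v x = root n (\<Prod>i<n. real (util v i x))"

definition pos_agents :: "nat \<Rightarrow> (nat \<Rightarrow> nat \<Rightarrow> nat) \<Rightarrow> nat set \<Rightarrow> nat set" where
  "pos_agents n v x = {i. i < n \<and> util v i x > 0}"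

definition pos_prod :: "nat \<Rightarrow> (nat \<Rightarrow> nat \<Rightarrow> nat) \<Rightarrow> nat set \<Rightarrow> real" where
  "pos_prod n v x = (\<Prod>i\<in>pos_agents n v x. real (util v i x))"

definition is_MNW :: "nat \<Rightarrow> nat \<Rightarrow> nat \<Rightarrow> (nat \<Rightarrow> nat \<Rightarrow> nat) \<Rightarrow> nat set \<Rightarrow> bool" where
  "is_MNW n m k v x \<longleftrightarrow> x \<in> allocations m k \<and>
     (if \<exists>y\<in>allocations m k. NW n v y > 0
      then (\<forall>y\<in>allocations m k. NW n v y \<le> NW n v x)
      else (\<forall>y\<in>allocations m k. card (pos_agents n v y) \<le> card (pos_agents n v x)) \<and>
           (\<forall>y\<in>allocations m k. card (pos_agents n v y) = card (pos_agents n v x)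
               \<longrightarrow> pos_prod n v y \<le> pos_prod n v x))"

definition Prop_share :: "nat \<Rightarrow> nat \<Rightarrow> nat \<Rightarrow> (nat \<Rightarrow> nat \<Rightarrow> nat) \<Rightarrow> nat \<Rightarrow> real" where
  "Prop_share n m k v i = (1 / real n) * real (Max ((util v i) ` allocations m k))"

definition Prop1 :: "nat \<Rightarrow> nat \<Rightarrow> nat \<Rightarrow> (nat \<Rightarrow> nat \<Rightarrow> nat) \<Rightarrow> nat set \<Rightarrow> bool" where
  "Prop1 n m k v x \<longleftrightarrow> (\<forall>i<n. \<exists>g\<in>x. \<exists>g'<m.
      real (util v i ((x - {g}) \<union> {g'})) \<ge> Prop_share n m k v i)"

end

theory Submission imports Defs begin

lemma alloc_fin: "x \<in> allocations m k \<Longrightarrow> finite x"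
  unfolding allocations_def by (auto intro: finite_subset)

lemma util_mono: "finite B \<Longrightarrow> A \<subseteq> B \<Longrightarrow> util v h A \<le> util v h B"
  unfolding util_def by (rule sum_mono2) auto

lemma util_remove: "finite x \<Longrightarrow> g \<in> x \<Longrightarrow> util v h x = util v h (x - {g}) + v h g"
  unfolding util_def by (simp add: sum.remove)

lemma util_swap: "finite x \<Longrightarrow> g \<in> x \<Longrightarrow> g' \<notin> x \<Longrightarrow>
   util v h (x - {g} \<union> {g'}) = util v h (x - {g}) + v h g'"
  unfolding util_def by (subst Un_commute) (simp add: sum.insert)

lemma util_ge_elem: "finite x \<Longrightarrow> g \<in> x \<Longrightarrow> v h g \<le> util v h x"
  unfolding util_def by (rule member_le_sum) auto

lemma weier:
  fixes u w :: "nat \<Rightarrow> real"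
  assumes "finite A" "\<forall>h\<in>A. 0 \<le> w h \<and> w h \<le> u h \<and> 0 < u h"
  shows "(\<Prod>h\<in>A. u h) * (1 - (\<Sum>h\<in>A. w h / u h)) \<le> (\<Prod>h\<in>A. u h - w h)"
  using assms
proof (induction A rule: finite_induct)
  case empty
  then show ?case by simp
next
  case (insert a A)
  define Q where "Q = (\<Prod>h\<in>A. u h)"
  define S where "S = (\<Sum>h\<in>A. w h / u h)"
  have Q0: "Q \<ge> 0" unfolding Q_def using insert.prems by (intro prod_nonneg) (auto simp: less_imp_le)
  have S0: "S \<ge> 0" unfolding S_def using insert.prems by (intro sum_nonneg) auto
  have IH: "Q * (1 - S) \<le> (\<Prod>h\<in>A. u h - w h)" using insert unfolding Q_def S_def by auto
  have wa: "0 \<le> w a" "w a \<le> u a" "0 < u a" using insert by auto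
  have "(\<Prod>h\<in>insert a A. u h) * (1 - (\<Sum>h\<in>insert a A. w h / u h))
      = u a * Q * (1 - S) - w a * Q"
    using insert wa unfolding Q_def S_def by (simp add: algebra_simps)
  also have "\<dots> \<le> (u a - w a) * (Q * (1 - S))"
    using Q0 S0 wa by (simp add: algebra_simps)
  also have "\<dots> \<le> (u a - w a) * (\<Prod>h\<in>A. u h - w h)"
    using IH wa by (intro mult_left_mono) auto
  finally show ?case using insert by simp
qed


lemma swap_contra:
  fixes P :: real
  assumes n0: "0 < n" and xA: "x \<in> allocations m k" and cx: "card x = k" and i: "i < n"
    and pos: "\<forall>h<n. util v h x > 0"
    and opt: "\<forall>y\<in>allocations m k. (\<Prod>h<n. real (util v h y)) \<le> (\<Prod>h<n. real (util v h x))"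
    and yA: "y \<in> allocations m k" and Pdef: "P = real (util v i y) / real n"
    and viol: "\<forall>g\<in>x. \<forall>g'<m. real (util v i (x - {g} \<union> {g'})) < P"
  shows False
proof -
  have fin: "finite x" using xA by (rule alloc_fin)
  have finy: "finite y" using yA by (rule alloc_fin)
  have xm: "x \<subseteq> {..<m}" and ym: "y \<subseteq> {..<m}" and cy: "card y \<le> k"
    using xA yA unfolding allocations_def by auto
  define U where "U = real (util v i x)"
  have U0: "U > 0" using pos i unfolding U_def by auto
  have "x \<noteq> {}" using pos i unfolding util_def by auto
  then obtain g0 where g0: "g0 \<in> x" by auto
  have "x - {g0} \<union> {g0} = x" using g0 by auto
  hence UP: "U < P" using viol g0 xm unfolding U_def by force
  define T where "T = x - y"
  define S where "S = y - x"
  have finT: "finite T" and finS: "finite S" using fin finy unfolding T_def S_def by auto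
  have cxy: "card x = card (x \<inter> y) + card T" unfolding T_def using card_Int_Diff[OF fin, of y] .
  have cyx: "card y = card (x \<inter> y) + card S" unfolding S_def using card_Int_Diff[OF finy, of x]
    by (simp add: Int_commute)
  have cST: "card S \<le> card T" using cxy cyx cx cy by linarith
  have ysplit: "y = (x \<inter> y) \<union> S" and xsplit: "x = (x \<inter> y) \<union> T" unfolding S_def T_def by auto
  have uy: "util v i y = util v i (x \<inter> y) + util v i S"
    unfolding util_def using finy finS by (subst ysplit, subst sum.union_disjoint) (auto simp: S_def)
  have ux: "util v i x = util v i (x \<inter> y) + util v i T"
    unfolding util_def using fin finT by (subst xsplit, subst sum.union_disjoint) (auto simp: T_def)
  have nP: "real n * P = real (util v i y)" unfolding Pdef using n0 by simp
  have Sne: "S \<noteq> {}"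
  proof
    assume "S = {}"
    hence "util v i y \<le> util v i x" using uy ux by (simp add: util_def)
    hence "real n * P \<le> U" using nP unfolding U_def by simp
    moreover have "real n \<ge> 1" using n0 by simp
    ultimately have "P \<le> U" using UP U0
      by (smt (verit, best) mult_le_cancel_right1)
    thus False using UP by simp
  qed
  have cT0: "card T > 0" using Sne finS cST by (metis card_gt_0_iff le_zero_eq not_gr_zero)
  define M where "M = Max (v i ` S)"
  have "M \<in> v i ` S" unfolding M_def using finS Sne by (intro Max_in) auto
  then obtain g' where g'S: "g' \<in> S" and g'M: "v i g' = M" by auto
  have g'max: "\<forall>s\<in>S. v i s \<le> v i g'" unfolding g'M M_def using finS by auto
  define Ag where "Ag = {..<n} - {i}"
  have finAg: "finite Ag" unfolding Ag_def by simp
  have cAg: "card Ag = n - 1" unfolding Ag_def using i by simp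
  define uh where "uh h = real (util v h x)" for h
  have uh0: "\<forall>h\<in>Ag. uh h > 0" unfolding uh_def Ag_def using pos by auto
  define f where "f t = real (v i t) + P * (\<Sum>h\<in>Ag. real (v h t) / uh h)" for t
  define Mf where "Mf = Min (f ` T)"
  have "Mf \<in> f ` T" unfolding Mf_def using finT cT0 by (intro Min_in) auto
  then obtain g where gT: "g \<in> T" and gM: "f g = Mf" by auto
  have gmin: "\<forall>t\<in>T. f g \<le> f t" unfolding gM Mf_def using finT by auto
  have P0: "P \<ge> 0" using UP U0 by simp
  have inner: "(\<Sum>h\<in>Ag. (\<Sum>t\<in>T. real (v h t)) / uh h) \<le> real (card Ag)"
  proof -
    have "(\<Sum>h\<in>Ag. (\<Sum>t\<in>T. real (v h t)) / uh h) \<le> (\<Sum>h\<in>Ag. 1)"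
    proof (rule sum_mono)
      fix h assume hO: "h \<in> Ag"
      have "util v h T \<le> util v h x" using fin by (intro util_mono) (auto simp: T_def)
      hence "(\<Sum>t\<in>T. real (v h t)) \<le> uh h" unfolding uh_def util_def by (simp flip: of_nat_sum)
      thus "(\<Sum>t\<in>T. real (v h t)) / uh h \<le> 1" using uh0 hO by simp
    qed
    thus ?thesis by simp
  qed
  have sumf: "(\<Sum>t\<in>T. f t) \<le> real (util v i T) + P * real (n - 1)"
  proof -
    have "(\<Sum>t\<in>T. f t) = real (util v i T) + P * (\<Sum>h\<in>Ag. (\<Sum>t\<in>T. real (v h t)) / uh h)"
      unfolding f_def util_def
      by (simp add: sum.distrib sum_distrib_left sum_divide_distrib sum.swap[of _ Ag T])
    also have "\<dots> \<le> real (util v i T) + P * real (n - 1)"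
      using inner cAg P0 by (simp add: mult_left_mono)
    finally show ?thesis .
  qed
  have lowf: "real (card T) * f g \<le> (\<Sum>t\<in>T. f t)"
    using gmin by (intro sum_bounded_below) auto
  have upS: "util v i S \<le> card S * v i g'"
    unfolding util_def using g'max sum_bounded_above[of S "v i" "v i g'"] by auto
  hence upS': "real (util v i S) \<le> real (card T) * real (v i g')"
    using cST by (smt (verit) mult_right_mono of_nat_le_iff of_nat_mult of_nat_0_le_iff)
  have rn: "real (n - 1) = real n - 1" using n0 by simp
  have "real (card T) * f g < real (card T) * real (v i g')"
  proof -
    have "real (util v i S) = real n * P - U + real (util v i T)"
      using nP uy ux unfolding U_def by simp
    moreover have "real n * P - U + real (util v i T) > real (util v i T) + P * real (n - 1)"
      using UP rn by (simp add: algebra_simps)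
    ultimately show ?thesis using upS' sumf lowf by linarith
  qed
  hence key: "f g < real (v i g')" using cT0 by simp
  define B where "B = (\<Sum>h\<in>Ag. real (v h g) / uh h)"
  have B0: "B \<ge> 0" unfolding B_def using uh0 by (intro sum_nonneg) auto
  have key2: "real (v i g) + P * B < real (v i g')" using key unfolding f_def B_def by simp
  have gx: "g \<in> x" and g'x: "g' \<notin> x" and g'm: "g' < m" using gT g'S ym unfolding T_def S_def by auto
  define x' where "x' = x - {g} \<union> {g'}"
  have ux': "util v h x' = util v h (x - {g}) + v h g'" for h
    unfolding x'_def using fin gx g'x by (rule util_swap)
  have urem: "util v h x = util v h (x - {g}) + v h g" for h using fin gx by (rule util_remove)
  have x'A: "x' \<in> allocations m k"
  proof -
    have "x' = insert g' (x - {g})" unfolding x'_def by auto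
    hence "card x' \<le> Suc (card (x - {g}))" using fin by (simp add: card_insert_if)
    also have "\<dots> = k" using cx gx fin by (metis card_Suc_Diff1)
    finally show ?thesis using xm g'm unfolding allocations_def x'_def by auto
  qed
  have ui': "real (util v i x') = U - real (v i g) + real (v i g')"
    unfolding U_def using ux'[of i] urem[of i] by simp
  have vi: "real (util v i x') < P" using viol gx g'm unfolding x'_def by blast
  have ui'0: "real (util v i x') \<ge> 0" by simp
  have Qdef: "(\<Prod>h<n. real (util v h z)) = real (util v i z) * (\<Prod>h\<in>Ag. real (util v h z))" for z
    unfolding Ag_def using i by (subst prod.remove[of _ i]) auto
  define Q where "Q = (\<Prod>h\<in>Ag. uh h)"
  have Q0: "Q > 0" unfolding Q_def using uh0 by (intro prod_pos) auto
  have "Q * (1 - B) \<le> (\<Prod>h\<in>Ag. uh h - real (v h g))"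
    unfolding Q_def B_def using finAg uh0
    by (intro weier) (auto simp: uh_def util_ge_elem[OF fin gx])
  also have "\<dots> \<le> (\<Prod>h\<in>Ag. real (util v h x'))"
  proof (rule prod_mono)
    fix h assume "h \<in> Ag"
    show "0 \<le> uh h - real (v h g) \<and> uh h - real (v h g) \<le> real (util v h x')"
      unfolding uh_def using urem[of h] ux'[of h] by simp
  qed
  finally have pO: "Q * (1 - B) \<le> (\<Prod>h\<in>Ag. real (util v h x'))" .
  have "real (util v i x') * (1 - B) \<ge> real (util v i x') - P * B"
  proof -
    have "B * real (util v i x') \<le> B * P" using vi B0 by (intro mult_left_mono) auto
    thus ?thesis by (simp add: algebra_simps)
  qed
  hence gt: "real (util v i x') * (1 - B) > U" using ui' key2 by linarith
  have "U * Q < real (util v i x') * (1 - B) * Q" using gt Q0 by simp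
  also have "\<dots> = real (util v i x') * (Q * (1 - B))" by simp
  also have "\<dots> \<le> real (util v i x') * (\<Prod>h\<in>Ag. real (util v h x'))"
    using pO ui'0 by (rule mult_left_mono)
  finally have "(\<Prod>h<n. real (util v h x)) < (\<Prod>h<n. real (util v h x'))"
    using Qdef[of x] Qdef[of x'] unfolding Q_def uh_def U_def by simp
  thus False using opt x'A by force
qed


lemma mult_lt_helper:
  fixes a a' q q' :: real
  assumes "q \<le> q'" "a < a'" "0 < q" "0 \<le> a'"
  shows "a * q < a' * q'"
proof -
  have "a * q < a' * q" using assms by simp
  also have "\<dots> \<le> a' * q'" using assms by (intro mult_left_mono) auto
  finally show ?thesis .
qed

lemma prod_split:
  assumes "i < n"
  shows "(\<Prod>h<n. real (util v h z)) = real (util v i z) * (\<Prod>h\<in>{..<n} - {i}. real (util v h z))"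
  using assms by (subst prod.remove[of _ i]) auto

theorem lemma4:
  fixes n m k :: nat and v :: "nat \<Rightarrow> nat \<Rightarrow> nat" and x :: "nat set"
  assumes "0 < n"
    and "1 \<le> k" and "k \<le> m"
    and "\<forall>i<n. \<exists>j<m. v i j > 0"
    and "is_MNW n m k v x"
  shows "Prop1 n m k v x"
proof -
  note n0 = assms(1) and k1 = assms(2) and km = assms(3) and posv = assms(4)
  define A where "A = allocations m k"
  have xA: "x \<in> A" using assms(5) unfolding is_MNW_def A_def by auto
  have MNW: "(if \<exists>y\<in>A. NW n v y > 0
      then (\<forall>y\<in>A. NW n v y \<le> NW n v x)
      else (\<forall>y\<in>A. card (pos_agents n v y) \<le> card (pos_agents n v x)) \<and>
           (\<forall>y\<in>A. card (pos_agents n v y) = card (pos_agents n v x)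
               \<longrightarrow> pos_prod n v y \<le> pos_prod n v x))"
    using assms(5) unfolding is_MNW_def A_def by auto
  have finA: "finite A" unfolding A_def allocations_def
    by (rule finite_subset[of _ "Pow {..<m}"]) auto
  have emA: "{} \<in> A" unfolding A_def allocations_def by auto
  have fin: "finite x" using xA unfolding A_def by (rule alloc_fin)
  have xm: "x \<subseteq> {..<m}" and cxk: "card x \<le> k" using xA unfolding A_def allocations_def by auto
  have finpos: "finite (pos_agents n v z)" for z unfolding pos_agents_def by simp
  have G1: "(\<forall>h<n. util v h x > 0) \<and>
      (\<forall>y\<in>A. (\<Prod>h<n. real (util v h y)) \<le> (\<Prod>h<n. real (util v h x)))"
    if ex: "\<exists>y\<in>A. NW n v y > 0"
  proof -
    have le: "\<forall>y\<in>A. NW n v y \<le> NW n v x" using MNW ex by simp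
    obtain y0 where "y0 \<in> A" "NW n v y0 > 0" using ex by auto
    hence "NW n v x > 0" using le by force
    hence "(\<Prod>h<n. real (util v h x)) \<noteq> 0" unfolding NW_def by (metis less_irrefl real_root_zero)
    hence p: "\<forall>h<n. util v h x > 0"
    proof (intro allI impI)
      fix h assume nz: "(\<Prod>h<n. real (util v h x)) \<noteq> 0" and h: "h < n"
      show "util v h x > 0"
      proof (rule ccontr)
        assume "\<not> util v h x > 0"
        hence "real (util v h x) = 0" by simp
        hence "(\<Prod>h<n. real (util v h x)) = 0" using h by (intro prod_zero) auto
        thus False using nz by simp
      qed
    qed
    have "\<forall>y\<in>A. (\<Prod>h<n. real (util v h y)) \<le> (\<Prod>h<n. real (util v h x))"
      using le n0 unfolding NW_def by simp
    thus ?thesis using p by simp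
  qed
  have G2: "x \<noteq> {}"
  proof (cases "\<exists>y\<in>A. NW n v y > 0")
    case True
    then have "util v 0 x > 0" using G1 n0 by auto
    thus ?thesis unfolding util_def by auto
  next
    case False
    obtain j where j: "j < m" "v 0 j > 0" using posv n0 by auto
    have jA: "{j} \<in> A" unfolding A_def allocations_def using j k1 by auto
    have "card (pos_agents n v {j}) \<le> card (pos_agents n v x)" using MNW False jA by auto
    moreover have "0 \<in> pos_agents n v {j}" unfolding pos_agents_def util_def using j n0 by auto
    ultimately have "card (pos_agents n v x) > 0" using finpos
      by (metis card_gt_0_iff empty_iff gr0I le_zero_eq)
    then obtain h where "h \<in> pos_agents n v x" by (metis card_gt_0_iff ex_in_conv)
    thus ?thesis unfolding pos_agents_def util_def by auto
  qed
  have G3: "\<exists>y\<in>A. NW n v y > 0" if nk: "n < k"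
  proof (rule ccontr)
    assume F: "\<not> (\<exists>y\<in>A. NW n v y > 0)"
    have cmax: "\<forall>y\<in>A. card (pos_agents n v y) \<le> card (pos_agents n v x)" using MNW F by auto
    have "\<not> NW n v x > 0" using F xA by auto
    moreover have "NW n v x \<ge> 0" unfolding NW_def by (intro real_root_ge_zero prod_nonneg) auto
    ultimately have "NW n v x = 0" by simp
    hence "(\<Prod>h<n. real (util v h x)) = 0" unfolding NW_def using n0 by simp
    then obtain i0 where i0: "i0 < n" "util v i0 x = 0" by auto
    obtain j0 where j0: "j0 < m" "v i0 j0 > 0" using posv i0 by auto
    have j0x: "j0 \<notin> x" using util_ge_elem[OF fin, of j0 v i0] i0 j0 by auto
    have i0p: "i0 \<notin> pos_agents n v x" unfolding pos_agents_def using i0 by auto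
    have "\<exists>x'\<in>A. insert i0 (pos_agents n v x) \<subseteq> pos_agents n v x'"
    proof (cases "card x < k")
      case True
      have "insert j0 x \<in> A" unfolding A_def allocations_def using True xm j0 fin
        by (auto simp: card_insert_if)
      moreover have "insert i0 (pos_agents n v x) \<subseteq> pos_agents n v (insert j0 x)"
      proof -
        have "util v h x \<le> util v h (insert j0 x)" for h using fin by (intro util_mono) auto
        moreover have "v i0 j0 \<le> util v i0 (insert j0 x)" using fin by (intro util_ge_elem) auto
        ultimately show ?thesis unfolding pos_agents_def using i0 j0
          by (auto simp del: util_def intro: less_le_trans)
      qed
      ultimately show ?thesis by blast
    next
      case False
      hence cx: "card x = k" using cxk by simp
      have "\<exists>g\<in>x. \<forall>h\<in>pos_agents n v x. util v h (x - {g}) > 0"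
      proof (rule ccontr)
        assume "\<not> ?thesis"
        hence "\<forall>g\<in>x. \<exists>h. h \<in> pos_agents n v x \<and> util v h (x - {g}) = 0" by auto
        then obtain \<phi> where phi: "\<forall>g\<in>x. \<phi> g \<in> pos_agents n v x \<and> util v (\<phi> g) (x - {g}) = 0"
          by metis
        have "inj_on \<phi> x"
        proof (rule inj_onI)
          fix g1 g2 assume g: "g1 \<in> x" "g2 \<in> x" "\<phi> g1 = \<phi> g2"
          show "g1 = g2"
          proof (rule ccontr)
            assume ne: "g1 \<noteq> g2"
            define h where "h = \<phi> g1"
            have "util v h (x - {g1}) = 0" using phi g unfolding h_def by auto
            moreover have "v h g2 \<le> util v h (x - {g1})" using fin g ne by (intro util_ge_elem) auto
            ultimately have "v h g2 = 0" by simp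
            moreover have "util v h (x - {g2}) = 0" using phi g unfolding h_def by auto
            ultimately have "util v h x = 0" using util_remove[OF fin g(2), of v h] by simp
            moreover have "h \<in> pos_agents n v x" using phi g unfolding h_def by auto
            ultimately show False unfolding pos_agents_def by auto
          qed
        qed
        moreover have "\<phi> ` x \<subseteq> {..<n} - {i0}" using phi i0p unfolding pos_agents_def by force
        ultimately have "card x \<le> card ({..<n} - {i0})" by (intro card_inj_on_le) auto
        also have "\<dots> = n - 1" using i0 by simp
        finally show False using cx nk by simp
      qed
      then obtain g where gx: "g \<in> x" and gp: "\<forall>h\<in>pos_agents n v x. util v h (x - {g}) > 0" by auto
      define x' where "x' = insert j0 (x - {g})"
      have "card x' \<le> Suc (card (x - {g}))" unfolding x'_def using fin by (simp add: card_insert_if)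
      also have "\<dots> = k" using cx gx fin by (metis card_Suc_Diff1)
      finally have x'A: "x' \<in> A" unfolding A_def allocations_def x'_def using xm j0 by auto
      have finx': "finite x'" unfolding x'_def using fin by simp
      have "insert i0 (pos_agents n v x) \<subseteq> pos_agents n v x'"
      proof
        fix h assume h: "h \<in> insert i0 (pos_agents n v x)"
        show "h \<in> pos_agents n v x'"
        proof (cases "h = i0")
          case True
          have "v i0 j0 \<le> util v i0 x'" using finx' by (intro util_ge_elem) (auto simp: x'_def)
          thus ?thesis using True i0 j0 unfolding pos_agents_def by auto
        next
          case False
          hence hp: "h \<in> pos_agents n v x" using h by auto
          have "util v h (x - {g}) \<le> util v h x'" using finx' by (intro util_mono) (auto simp: x'_def)
          thus ?thesis using gp hp unfolding pos_agents_def by auto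
        qed
      qed
      thus ?thesis using x'A by blast
    qed
    then obtain x' where x'A: "x' \<in> A" and sub: "insert i0 (pos_agents n v x) \<subseteq> pos_agents n v x'" by blast
    have "card (insert i0 (pos_agents n v x)) \<le> card (pos_agents n v x')"
      using sub finpos by (intro card_mono) auto
    moreover have "card (insert i0 (pos_agents n v x)) = Suc (card (pos_agents n v x))"
      using i0p finpos by simp
    moreover have "card (pos_agents n v x') \<le> card (pos_agents n v x)" using cmax x'A by auto
    ultimately show False by simp
  qed
  show ?thesis unfolding Prop1_def
  proof (intro allI impI)
    fix i assume i: "i < n"
    have uA: "util v i ` A \<noteq> {}" using emA by auto
    define Mx where "Mx = Max (util v i ` A)"
    have "Mx \<in> util v i ` A" unfolding Mx_def using finA uA by (intro Max_in) auto
    then obtain y where yA: "y \<in> A" and yM: "util v i y = Mx" by auto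
    have Peq: "Prop_share n m k v i = real (util v i y) / real n"
      unfolding Prop_share_def A_def[symmetric] Mx_def[symmetric] yM by simp
    have fy: "finite y" and ym: "y \<subseteq> {..<m}" and cy: "card y \<le> k"
      using yA unfolding A_def allocations_def by (auto intro: finite_subset)
    obtain g0 where g0: "g0 \<in> x" using G2 by auto
    have g0m: "g0 < m" using g0 xm by auto
    have "\<exists>g\<in>x. \<exists>g'<m. real (util v i y) / real n \<le> real (util v i (x - {g} \<union> {g'}))"
    proof (cases "k \<le> n")
      case True
      define a where "a = Max (v i ` {..<m})"
      have "a \<in> v i ` {..<m}" unfolding a_def using km k1 by (intro Max_in) (auto simp: lessThan_empty_iff)
      then obtain js where js: "js < m" "v i js = a" by auto
      have amax: "\<forall>j<m. v i j \<le> a" unfolding a_def by auto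
      have "util v i y \<le> card y * a"
        unfolding util_def using amax ym sum_bounded_above[of y "v i" a] by auto
      also have "\<dots> \<le> n * a" using cy True by (intro mult_right_mono) auto
      finally have "real (util v i y) \<le> real n * real a" by (metis of_nat_le_iff of_nat_mult)
      hence "real (util v i y) / real n \<le> real a" using n0 by (simp add: divide_le_eq mult.commute)
      moreover have "a \<le> util v i (x - {g0} \<union> {js})" unfolding js(2)[symmetric] using fin
        by (intro util_ge_elem) auto
      ultimately show ?thesis using g0 js by (meson of_nat_le_iff order_trans)
    next
      case False
      hence nk: "n < k" by simp
      have ex: "\<exists>y\<in>A. NW n v y > 0" using G3 nk by blast
      have pos: "\<forall>h<n. util v h x > 0" and opt: "\<forall>y\<in>A. (\<Prod>h<n. real (util v h y)) \<le> (\<Prod>h<n. real (util v h x))"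
        using G1[OF ex] by auto
      show ?thesis
      proof (cases "card x < k")
        case True
        show ?thesis
        proof (cases "\<exists>g'<m. g' \<notin> x \<and> v i g' > 0")
          case True
          then obtain g' where g': "g' < m" "g' \<notin> x" "v i g' > 0" by auto
          define x' where "x' = insert g' x"
          have x'A: "x' \<in> A" unfolding A_def allocations_def x'_def using \<open>card x < k\<close> xm g' fin
            by (auto simp: card_insert_if)
          have ux': "util v h x' = util v h x + v h g'" for h
            unfolding x'_def util_def using fin g' by simp
          have Q0: "(\<Prod>h\<in>{..<n} - {i}. real (util v h x)) > 0" using pos by (intro prod_pos) auto
          have "(\<Prod>h\<in>{..<n} - {i}. real (util v h x)) \<le> (\<Prod>h\<in>{..<n} - {i}. real (util v h x'))"
            by (intro prod_mono) (auto simp: ux')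
          moreover have "real (util v i x) < real (util v i x')" using ux' g' by simp
          ultimately have "real (util v i x) * (\<Prod>h\<in>{..<n} - {i}. real (util v h x))
              < real (util v i x') * (\<Prod>h\<in>{..<n} - {i}. real (util v h x'))"
            using Q0 by (intro mult_lt_helper) auto
          thus ?thesis using opt x'A prod_split[OF i, of v x] prod_split[OF i, of v x'] by force
        next
          case False
          have "util v i y \<le> util v i (x \<union> y)" using fin fy by (intro util_mono) auto
          also have "\<dots> = util v i x + util v i (y - x)"
            unfolding util_def using fin fy
            by (metis Un_Diff_cancel Diff_disjoint sum.union_disjoint finite_Diff Int_commute Diff_Int_distrib2 inf_bot_right)
          also have "util v i (y - x) = 0" unfolding util_def using False ym by (intro sum.neutral) auto
          finally have "real (util v i y) \<le> real (util v i x)" by simp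
          moreover have "real (util v i y) / real n \<le> real (util v i y)" using n0
            by (simp add: divide_le_eq mult_le_cancel_left1) 
          moreover have "x - {g0} \<union> {g0} = x" using g0 by auto
          ultimately show ?thesis using g0 g0m by (metis order_trans)
        qed
      next
        case False
        hence cx: "card x = k" using cxk by simp
        show ?thesis
        proof (rule ccontr)
          assume "\<not> ?thesis"
          hence "\<forall>g\<in>x. \<forall>g'<m. real (util v i (x - {g} \<union> {g'})) < real (util v i y) / real n"
            by (auto simp: not_le)
          thus False using swap_contra[OF n0 xA[unfolded A_def] cx i pos opt[unfolded A_def] yA[unfolded A_def] refl]
            by blast
        qed
      qed
    qed
    thus "\<exists>g\<in>x. \<exists>g'<m. Prop_share n m k v i \<le> real (util v i (x - {g} \<union> {g'}))"
      unfolding Peq .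
  qed
qed

end
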